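(* (a) Fix an input distribution $p\in\Delta_m$ and define, for $P$ in the set $\Delta_{n\times m}$ of $n\times m$ nonnegative matrices with entries summing to $1$, $$I_c(P)=\sum_{j=1}^m\sum_{i=1}^nP_{ij}\log\Big(\frac{P_{ij}}{\sum_{k=1}^m p_jP_{ik}}\Big).$$ Then $I_c$ is $1$-smooth relative to the negative Shannon entropy $-H$ on $\Delta_{n\times m}$. (b) Fix an input state $\rho_A\in\mathcal{D}(\mathcal{H}_A)$ and define, for $\rho_{BR}\in\mathcal{D}(\mathcal{H}_B\otimes\mathcal{H}_R)$, $$I_q(\rho_{BR})=S(\rho_A)+S(\operatorname{tr}_R(\rho_{BR}))-S(\rho_{BR}).$$ Then $I_q$ is $1$-smooth relative to the negative von Neumann entropy $-S$ on $\mathcal{D}(\mathcal{H}_B\otimes\mathcal{H}_R)$.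
   Context: $H(x)=-\sum_i x_i\log x_i$ (applied entrywise to matrices); $S(\rho)=-\operatorname{tr}[\rho\log\rho]$; $\mathcal{D}(\cdot)$ denotes density matrices and $\operatorname{tr}_R$ the partial trace over $\mathcal{H}_R$. A function $f$ is $L$-smooth relative to a Legendre function $\varphi$ on a convex set $\mathcal{C}$ if $L\varphi-f$ is convex on the relative interior of $\mathcal{C}$. *)

theory Defs
  imports "HOL-Analysis.Analysis"
begin

definition rel_smooth :: "real \<Rightarrow> ('a::real_normed_vector \<Rightarrow> real) \<Rightarrow> ('a \<Rightarrow> real) \<Rightarrow> 'a set \<Rightarrow> bool"
  where "rel_smooth L f \<phi> C \<longleftrightarrow> convex_on (rel_interior C) (\<lambda>x. L * \<phi> x - f x)"

definition prob_simplex :: "(real^'m) set"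
  where "prob_simplex = {p. (\<forall>j. 0 \<le> p $ j) \<and> (\<Sum>j\<in>UNIV. p $ j) = 1}"

text \<open>n x m nonnegative matrices with entries summing to 1 (row index i :: 'n, column j :: 'm).\<close>
definition mat_simplex :: "(real^'m^'n) set"
  where "mat_simplex = {P. (\<forall>i j. 0 \<le> P $ i $ j) \<and> (\<Sum>i\<in>UNIV. \<Sum>j\<in>UNIV. P $ i $ j) = 1}"

text \<open>Shannon entropy applied entrywise (0 log 0 = 0 holds automatically since 0 * _ = 0).\<close>
definition shannon_H :: "real^'m^'n \<Rightarrow> real"
  where "shannon_H P = - (\<Sum>i\<in>UNIV. \<Sum>j\<in>UNIV. P $ i $ j * ln (P $ i $ j))"

definition I_c :: "real^'m \<Rightarrow> real^'m^'n \<Rightarrow> real"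
  where "I_c p P = (\<Sum>j\<in>UNIV. \<Sum>i\<in>UNIV.
            P $ i $ j * ln (P $ i $ j / (\<Sum>k\<in>UNIV. p $ j * P $ i $ k)))"

definition adjoint_mat :: "complex^'n^'n \<Rightarrow> complex^'n^'n"
  where "adjoint_mat A = (\<chi> i j. cnj (A $ j $ i))"

definition hermitian_mat :: "complex^'n^'n \<Rightarrow> bool"
  where "hermitian_mat A \<longleftrightarrow> adjoint_mat A = A"

definition unitary_mat :: "complex^'n^'n \<Rightarrow> bool"
  where "unitary_mat U \<longleftrightarrow> U ** adjoint_mat U = mat 1 \<and> adjoint_mat U ** U = mat 1"

definition psd_mat :: "complex^'n^'n \<Rightarrow> bool"
  where "psd_mat A \<longleftrightarrow> hermitian_mat A \<and>
           (\<forall>x::complex^'n. 0 \<le> Re (\<Sum>i\<in>UNIV. cnj (x $ i) * (A *v x) $ i))"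

definition density_mats :: "(complex^'n^'n) set"
  where "density_mats = {\<rho>. psd_mat \<rho> \<and> trace \<rho> = 1}"

definition diag_mat :: "('n \<Rightarrow> real) \<Rightarrow> complex^'n^'n"
  where "diag_mat ev = (\<chi> i j. if i = j then complex_of_real (ev i) else 0)"

definition mat_fun :: "(real \<Rightarrow> real) \<Rightarrow> complex^'n^'n \<Rightarrow> complex^'n^'n"
  where "mat_fun f A =
     (let (U, ev) = (SOME (U, ev). unitary_mat U \<and> A = U ** diag_mat ev ** adjoint_mat U)
      in U ** diag_mat (f \<circ> ev) ** adjoint_mat U)"

text \<open>von Neumann entropy S(rho) = - tr[rho log rho], with 0 log 0 = 0, i.e.
  rho log rho := (x \<mapsto> x ln x)(rho).\<close>
definition vN_S :: "complex^'n^'n \<Rightarrow> real"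
  where "vN_S \<rho> = - Re (trace (mat_fun (\<lambda>x. x * ln x) \<rho>))"

text \<open>Partial trace over H_R, with H_B \<otimes> H_R indexed by 'b \<times> 'r.\<close>
definition ptrace_R :: "complex^('b::finite \<times> 'r::finite)^('b \<times> 'r) \<Rightarrow> complex^'b^'b"
  where "ptrace_R \<rho> = (\<chi> b b'. \<Sum>r\<in>UNIV. \<rho> $ (b, r) $ (b', r))"

definition I_q :: "complex^'a^'a \<Rightarrow> complex^('b::finite \<times> 'r::finite)^('b \<times> 'r) \<Rightarrow> real"
  where "I_q \<rho>A \<rho> = vN_S \<rho>A + vN_S (ptrace_R \<rho>) - vN_S \<rho>"

end

theory Submission
  imports Defs
begin

definition cinner :: "complex^'n \<Rightarrow> complex^'n \<Rightarrow> complex"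
  where "cinner x y = (\<Sum>i\<in>UNIV. cnj (x$i) * y$i)"

lemma cinner_cnj: "cnj (cinner x y) = cinner y x"
  by (simp add: cinner_def mult.commute)

lemma inner_cinner: "inner x y = Re (cinner x y)"
  by (simp add: inner_vec_def cinner_def inner_complex_def Re_sum algebra_simps)

lemma cinner_add_right: "cinner x (y + z) = cinner x y + cinner x z"
  by (simp add: cinner_def sum.distrib algebra_simps)

lemma cinner_diff_right: "cinner x (y - z) = cinner x y - cinner x z"
  by (simp add: cinner_def sum_subtractf algebra_simps)

lemma vec_scaleR_nth: "(r *\<^sub>R (x::complex^'n))$i = of_real r * x$i"
  by (subst vector_scaleR_component) (rule scaleR_conv_of_real)

lemma cinner_scaleR_right: "cinner x (r *\<^sub>R y) = of_real r * cinner x y"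
  by (simp add: cinner_def sum_distrib_left vec_scaleR_nth del: vector_scaleR_component, simp add: algebra_simps)

lemma cinner_scaleR_left: "cinner (r *\<^sub>R x) y = of_real r * cinner x y"
  by (simp add: cinner_def sum_distrib_left vec_scaleR_nth del: vector_scaleR_component, simp add: algebra_simps)

lemma cinner_smult_right: "cinner x (c *s y) = c * cinner x y"
  by (simp add: cinner_def sum_distrib_left algebra_simps)

lemma cinner_smult_left: "cinner (c *s x) y = cnj c * cinner x y"
  by (simp add: cinner_def sum_distrib_left algebra_simps)

lemma cinner_self_real: "cinner x x = of_real (inner x x)"
proof -
  have "Im (cinner x x) = 0"
    by (simp add: cinner_def Im_sum algebra_simps)
  then show ?thesis using inner_cinner[of x x] complex_eq_iff by auto
qed

lemma cinner_self_norm: "cinner x x = of_real ((norm x)^2)"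
  by (simp add: cinner_self_real power2_norm_eq_inner)

lemma herm_entry: "hermitian_mat A \<Longrightarrow> A $ i $ j = cnj (A $ j $ i)"
  unfolding hermitian_mat_def adjoint_mat_def
  by (metis vec_lambda_beta complex_cnj_cnj)

lemma herm_cinner:
  assumes "hermitian_mat A"
  shows "cinner x (A *v y) = cinner (A *v x) y"
proof -
  have "cinner x (A *v y) = (\<Sum>i\<in>UNIV. \<Sum>j\<in>UNIV. cnj (x$i) * A$i$j * y$j)"
    by (simp add: cinner_def matrix_vector_mult_def sum_distrib_left mult.assoc)
  also have "\<dots> = (\<Sum>j\<in>UNIV. \<Sum>i\<in>UNIV. cnj (x$i) * A$i$j * y$j)"
    by (rule sum.swap)
  also have "\<dots> = cinner (A *v x) y"
  proof -
    have h: "cnj (A$j$i) = A$i$j" for i j using herm_entry[OF assms, of i j] by simp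
    show ?thesis
      by (simp add: cinner_def matrix_vector_mult_def sum_distrib_right sum_distrib_left h mult.commute mult.left_commute)
  qed
  finally show ?thesis .
qed

lemma herm_inner:
  assumes "hermitian_mat A"
  shows "inner x (A *v y) = inner (A *v x) y"
  by (simp add: inner_cinner herm_cinner[OF assms])

lemma mvec_scaleR: "(A::complex^'n^'m) *v (r *\<^sub>R x) = r *\<^sub>R (A *v x)"
  unfolding vec_eq_iff
  by (simp add: matrix_vector_mult_def vec_scaleR_nth sum_distrib_left mult.left_commute del: vector_scaleR_component)

lemma mvec_bounded_linear: "bounded_linear (\<lambda>x. (A::complex^'n^'m) *v x)"
proof -
  have "linear (\<lambda>x. A *v x)"
    by (rule linearI[OF matrix_vector_right_distrib mvec_scaleR])
  then show ?thesis by (rule linear_conv_bounded_linear[THEN iffD1])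
qed
lemma exists_orth:
  fixes S :: "(complex^'n) set"
  assumes "card S < CARD('n)" "finite S"
  obtains y where "y \<noteq> 0" "\<forall>s\<in>S. cinner s y = 0"
proof -
  let ?T = "S \<union> (\<lambda>s. \<i> *s s) ` S"
  have "dim ?T \<le> card ?T" by (rule dim_le_card') (use assms(2) in blast)
  also have "card ?T \<le> card S + card ((\<lambda>s. \<i> *s s) ` S)" by (rule card_Un_le)
  also have "\<dots> \<le> card S + card S" by (rule add_left_mono[OF card_image_le[OF assms(2)]])
  also have "\<dots> < DIM(complex^'n)" using assms(1) by simp
  finally have "dim ?T < DIM(complex^'n)" .
  then obtain y where y: "y \<noteq> 0" "\<And>z. z \<in> span ?T \<Longrightarrow> orthogonal y z"
    using orthogonal_to_subspace_exists by metis
  have "cinner s y = 0" if s: "s \<in> S" for s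
  proof -
    have "orthogonal y s" by (intro y(2) span_base) (use s in blast)
    then have 1: "Re (cinner y s) = 0" by (simp add: orthogonal_def inner_cinner)
    have "orthogonal y (\<i> *s s)" by (intro y(2) span_base) (use s in blast)
    then have "Re (cinner y (\<i> *s s)) = 0" by (simp add: orthogonal_def inner_cinner)
    then have 2: "Im (cinner y s) = 0" by (simp add: cinner_smult_right)
    have "cinner y s = 0" using 1 2 complex_eq_iff by auto
    then show ?thesis by (metis cinner_cnj complex_cnj_zero)
  qed
  then show ?thesis using y(1) that by blast
qed

lemma real_zero_lemma:
  fixes a C :: real
  assumes "a \<ge> 0" "\<And>t. t > 0 \<Longrightarrow> 2 * a \<le> t * C"
  shows "a = 0"
proof (rule ccontr)
  assume "a \<noteq> 0"
  then have a: "a > 0" using assms(1) by linarith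
  show False
  proof (cases "C \<le> 0")
    case True
    have "2 * a \<le> 1 * C" using assms(2)[of 1] by simp
    then show False using True a by linarith
  next
    case False
    have "a / C > 0" using a False by simp
    then have "2 * a \<le> (a / C) * C" using assms(2)[of "a / C"] by blast
    moreover have "(a / C) * C = a" using False by simp
    ultimately show False using a by linarith
  qed
qed

lemma rayleigh_eig:
  fixes A :: "complex^'n^'n"
  assumes herm: "hermitian_mat A"
    and sub: "subspace V"
    and inv: "\<And>x. x \<in> V \<Longrightarrow> A *v x \<in> V"
    and y: "y \<in> V" "y \<noteq> 0"
  shows "\<exists>x\<in>V. norm x = 1 \<and> (\<exists>l::real. A *v x = l *\<^sub>R x)"
proof -
  define q where "q x = inner x (A *v x)" for x
  define K where "K = V \<inter> sphere 0 1"
  have cK: "compact K" unfolding K_def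
    using closed_Int_compact[OF closed_subspace[OF sub] compact_sphere] by simp
  have "(1 / norm y) *\<^sub>R y \<in> K" unfolding K_def using y sub
    by (simp add: subspace_scale)
  then have neK: "K \<noteq> {}" by blast
  have "continuous_on K q" unfolding q_def
    by (rule continuous_on_inner[OF continuous_on_id linear_continuous_on[OF mvec_bounded_linear]])
  then obtain x where xK: "x \<in> K" and xmax: "\<And>z. z \<in> K \<Longrightarrow> q z \<le> q x"
    using continuous_attains_sup[OF cK neK] by blast
  define l where "l = q x"
  have xV: "x \<in> V" and nx: "norm x = 1" using xK unfolding K_def by auto
  have xx: "inner x x = 1" using nx by (simp add: power2_norm_eq_inner[symmetric])
  have qscale: "q (r *\<^sub>R z) = r^2 * q z" for r z
    by (simp add: q_def mvec_scaleR power2_eq_square)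
  have bound: "q z \<le> l * inner z z" if zV: "z \<in> V" for z
  proof (cases "z = 0")
    case True then show ?thesis by (simp add: q_def)
  next
    case False
    let ?z = "(1 / norm z) *\<^sub>R z"
    have "?z \<in> K" unfolding K_def using zV False sub by (simp add: subspace_scale)
    then have "q ?z \<le> l" using xmax l_def by simp
    then have "(1/norm z)^2 * q z \<le> l" by (simp add: qscale)
    then have "q z \<le> l * (norm z)^2" using False
      by (simp add: field_simps)
    then show ?thesis by (simp add: power2_norm_eq_inner)
  qed
  define w where "w = A *v x - l *\<^sub>R x"
  have wV: "w \<in> V" unfolding w_def
    by (intro subspace_diff[OF sub] inv xV subspace_scale[OF sub])
  have "inner w x = inner (A *v x) x - l * inner x x" 
    unfolding w_def inner_diff_left inner_scaleR_left by (rule refl)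
  moreover have "inner (A *v x) x = l" unfolding l_def q_def by (rule inner_commute)
  ultimately have wx: "inner w x = 0"
    using xx by simp
  have Axw: "inner x (A *v w) = inner w (A *v x)"
    using herm_inner[OF herm, of x w] inner_commute[of w "A *v x"] by simp
  have wAx: "inner w (A *v x) = inner w w"
  proof -
    have "A *v x = w + l *\<^sub>R x" by (simp only: w_def diff_add_cancel)
    then show ?thesis using wx by (simp add: inner_add_right)
  qed
  have key: "2 * inner w w \<le> t * (l * inner w w - q w)" if t: "t > 0" for t
  proof -
    have zV: "x + t *\<^sub>R w \<in> V" using xV wV sub by (simp add: subspace_add subspace_scale)
    have Av: "A *v (x + t *\<^sub>R w) = A *v x + t *\<^sub>R (A *v w)"
      by (simp only: matrix_vector_right_distrib mvec_scaleR)
    have "q (x + t *\<^sub>R w) = q x + t * inner x (A *v w) + t * inner w (A *v x) + t^2 * q w"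
      unfolding q_def Av
      by (simp add: inner_add_left inner_add_right power2_eq_square algebra_simps)
    also have "\<dots> = l + 2 * t * inner w w + t^2 * q w"
      using Axw wAx by (simp add: l_def)
    finally have e1: "q (x + t *\<^sub>R w) = l + 2 * t * inner w w + t^2 * q w" .
    have xw: "inner x w = 0" using wx by (simp add: inner_commute)
    have e2: "inner (x + t *\<^sub>R w) (x + t *\<^sub>R w) = 1 + t^2 * inner w w"
      using xx wx xw by (simp add: inner_add_left inner_add_right power2_eq_square)
    have "l + 2 * t * inner w w + t^2 * q w \<le> l * (1 + t^2 * inner w w)"
      using bound[OF zV] e1 e2 by simp
    then have "t * (2 * inner w w) \<le> t * (t * (l * inner w w - q w))"
      by (simp add: power2_eq_square algebra_simps)
    then show ?thesis using t by (simp add: mult_le_cancel_left_pos)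
  qed
  have "inner w w = 0" by (rule real_zero_lemma[OF inner_ge_zero key]) simp
  then have "w = 0" by simp
  then have "A *v x = l *\<^sub>R x" unfolding w_def by (rule eq_iff_diff_eq_0[THEN iffD2])
  then show ?thesis using xV nx by blast
qed

lemma cinner_zero_right[simp]: "cinner x 0 = 0"
  by (simp add: cinner_def)

definition orthonormal :: "(complex^'n) set \<Rightarrow> bool"
  where "orthonormal S \<longleftrightarrow> (\<forall>s\<in>S. \<forall>t\<in>S. cinner s t = (if s = t then 1 else 0))"

lemma eig_set_exists:
  fixes A :: "complex^'n^'n"
  assumes herm: "hermitian_mat A"
  shows "k \<le> CARD('n) \<Longrightarrow> \<exists>S. finite S \<and> card S = k \<and> orthonormal S \<and>
           (\<forall>s\<in>S. \<exists>l::real. A *v s = l *\<^sub>R s)"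
proof (induction k)
  case 0 show ?case by (intro exI[of _ "{}"]) (simp add: orthonormal_def)
next
  case (Suc k)
  then obtain S where S: "finite S" "card S = k" "orthonormal S"
      "\<forall>s\<in>S. \<exists>l::real. A *v s = l *\<^sub>R s"
    by (meson Suc_leD)
  have lt: "card S < CARD('n)" using Suc.prems S(2) by simp
  obtain y where y: "y \<noteq> 0" "\<forall>s\<in>S. cinner s y = 0" using exists_orth[OF lt S(1)] by blast
  define V where "V = {x. \<forall>s\<in>S. cinner s x = 0}"
  have sub: "subspace V" unfolding subspace_def V_def
    by (simp add: cinner_add_right cinner_scaleR_right)
  have inv: "A *v x \<in> V" if xV: "x \<in> V" for x
  proof -
    { fix s assume s: "s \<in> S"
      obtain l :: real where l: "A *v s = l *\<^sub>R s" using S(4) s by blast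
      have "cinner s (A *v x) = cinner (A *v s) x" by (rule herm_cinner[OF herm])
      also have "\<dots> = 0" using xV s by (simp add: l cinner_scaleR_left V_def)
      finally have "cinner s (A *v x) = 0" . }
    then show ?thesis by (simp add: V_def)
  qed
  have yV: "y \<in> V" using y(2) by (simp add: V_def)
  obtain x where x: "x \<in> V" "norm x = 1" "\<exists>l::real. A *v x = l *\<^sub>R x"
    using rayleigh_eig[OF herm sub inv yV y(1)] by blast
  have xx: "cinner x x = 1" using x(2) by (simp add: cinner_self_norm)
  have xS: "x \<notin> S" using x(1) xx unfolding V_def by auto
  have xs1: "cinner s x = 0" if "s \<in> S" for s using x(1) that unfolding V_def by auto
  have xs2: "cinner x s = 0" if "s \<in> S" for s using xs1[OF that] by (metis cinner_cnj complex_cnj_zero)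
  show ?case
    apply (intro exI[of _ "insert x S"])
    using S xS xx xs1 xs2 x(3) by (auto simp: orthonormal_def)
qed

lemma spectral:
  fixes A :: "complex^'n^'n"
  assumes herm: "hermitian_mat A"
  shows "\<exists>U ev. unitary_mat U \<and> A = U ** diag_mat ev ** adjoint_mat U"
proof -
  obtain S where S: "finite S" "card S = CARD('n)" "orthonormal S"
      "\<forall>s\<in>S. \<exists>l::real. A *v s = l *\<^sub>R s"
    using eig_set_exists[OF herm, of "CARD('n)"] by auto
  obtain g where g: "bij_betw g (UNIV::'n set) S"
    using finite_same_card_bij[of "UNIV::'n set" S] S by auto
  have gS: "g j \<in> S" for j using g bij_betwE by blast
  have ginj: "g j = g k \<longleftrightarrow> j = k" for j k
    using g by (metis bij_betw_imp_inj_on injD)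
  define ev where "ev j = (SOME l::real. A *v g j = l *\<^sub>R g j)" for j
  have ev: "A *v g j = ev j *\<^sub>R g j" for j
    unfolding ev_def by (rule someI_ex) (use S(4) gS in blast)
  define U :: "complex^'n^'n" where "U = (\<chi> i j. g j $ i)"
  have orth: "cinner (g j) (g k) = (if j = k then 1 else 0)" for j k
    using S(3) gS ginj unfolding orthonormal_def by metis
  have UhU: "adjoint_mat U ** U = mat 1"
    unfolding vec_eq_iff
  proof (intro allI)
    fix j k
    have "(adjoint_mat U ** U) $ j $ k = cinner (g j) (g k)"
      by (simp add: adjoint_mat_def U_def matrix_matrix_mult_def cinner_def)
    then show "(adjoint_mat U ** U) $ j $ k = mat 1 $ j $ k"
      by (simp add: orth mat_def)
  qed
  have UUh: "U ** adjoint_mat U = mat 1" using UhU matrix_left_right_inverse by blast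
  have AU: "A ** U = U ** diag_mat ev"
    unfolding vec_eq_iff
  proof (intro allI)
    fix i j
    have "(A ** U) $ i $ j = (A *v g j) $ i"
      by (simp add: matrix_matrix_mult_def matrix_vector_mult_def U_def)
    also have "\<dots> = of_real (ev j) * g j $ i" by (simp add: ev vec_scaleR_nth del: vector_scaleR_component)
    also have "\<dots> = (U ** diag_mat ev) $ i $ j"
      by (simp add: matrix_matrix_mult_def diag_mat_def U_def if_distrib cong: if_cong)
    finally show "(A ** U) $ i $ j = (U ** diag_mat ev) $ i $ j" .
  qed
  have "A = A ** (U ** adjoint_mat U)" by (simp add: UUh)
  also have "\<dots> = (A ** U) ** adjoint_mat U" by (simp add: matrix_mul_assoc)
  also have "\<dots> = U ** diag_mat ev ** adjoint_mat U" using AU by simp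
  finally show ?thesis using UhU UUh unitary_mat_def by blast
qed


lemma adj_cinner: "cinner x (M *v y) = cinner (adjoint_mat M *v x) y"
proof -
  have "cinner x (M *v y) = (\<Sum>i\<in>UNIV. \<Sum>j\<in>UNIV. cnj (x$i) * M$i$j * y$j)"
    by (simp add: cinner_def matrix_vector_mult_def sum_distrib_left mult.assoc)
  also have "\<dots> = (\<Sum>j\<in>UNIV. \<Sum>i\<in>UNIV. cnj (x$i) * M$i$j * y$j)"
    by (rule sum.swap)
  also have "\<dots> = cinner (adjoint_mat M *v x) y"
    by (simp add: cinner_def matrix_vector_mult_def adjoint_mat_def sum_distrib_right
        sum_distrib_left mult.commute mult.left_commute)
  finally show ?thesis .
qed

lemma sum_if_mult: "(\<Sum>j\<in>UNIV. (if k = j then a j else 0) * (z j::complex)) = a k * z k" for k :: "'n::finite"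
proof -
  have "(\<Sum>j\<in>UNIV. (if k = j then a j else 0) * z j) = (\<Sum>j\<in>UNIV. if k = j then a j * z j else 0)"
    by (rule sum.cong) auto
  then show ?thesis by simp
qed

lemma diag_mv: "(diag_mat d *v z)$k = of_real (d k) * z$k"
  unfolding diag_mat_def matrix_vector_mult_def by (simp add: sum_if_mult)

lemma norm_sq_vec: "(norm (z::complex^'n))^2 = (\<Sum>k\<in>UNIV. (cmod (z$k))^2)"
  by (simp add: norm_vec_def L2_set_def sum_nonneg)

definition qf :: "complex^'n^'n \<Rightarrow> complex^'n \<Rightarrow> real"
  where "qf A x = Re (cinner x (A *v x))"

lemma qf_decomp:
  assumes "A = U ** diag_mat d ** adjoint_mat U"
  shows "qf A x = (\<Sum>k\<in>UNIV. d k * (cmod ((adjoint_mat U *v x)$k))^2)"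
proof -
  define z where "z = adjoint_mat U *v x"
  have "A *v x = U *v (diag_mat d *v z)"
    by (simp add: assms z_def matrix_vector_mul_assoc[symmetric])
  then have "cinner x (A *v x) = cinner z (diag_mat d *v z)"
    by (simp add: adj_cinner z_def)
  also have "\<dots> = (\<Sum>k\<in>UNIV. of_real (d k) * (z$k * cnj (z$k)))"
    by (simp add: cinner_def diag_mv mult.commute mult.left_commute)
  also have "\<dots> = (\<Sum>k\<in>UNIV. of_real (d k * (cmod (z$k))^2))"
    by (simp add: complex_norm_square[symmetric])
  finally show ?thesis by (simp add: qf_def z_def)
qed

lemma parseval:
  assumes "U ** adjoint_mat U = mat 1"
  shows "(\<Sum>k\<in>UNIV. (cmod ((adjoint_mat U *v x)$k))^2) = (norm x)^2"
proof -
  define z where "z = adjoint_mat U *v x"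
  have "of_real ((norm z)^2) = cinner z z" by (simp add: cinner_self_norm)
  also have "\<dots> = cinner x (U *v z)" by (simp add: adj_cinner z_def)
  also have "\<dots> = cinner x x" by (simp add: z_def matrix_vector_mul_assoc assms)
  also have "\<dots> = of_real ((norm x)^2)" by (simp add: cinner_self_norm)
  finally have "(norm z)^2 = (norm x)^2" by (simp only: of_real_eq_iff)
  then show ?thesis by (simp add: norm_sq_vec z_def)
qed

lemma udiag_entry: "(U ** diag_mat d) $ k $ m = U $ k $ m * of_real (d m)"
  by (simp add: matrix_matrix_mult_def diag_mat_def if_distrib cong: if_cong)

lemma trace_udu:
  assumes "adjoint_mat U ** U = mat 1"
  shows "trace (U ** diag_mat d ** adjoint_mat U) = of_real (\<Sum>i\<in>UNIV. d i)"
proof -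
  have "trace (U ** diag_mat d ** adjoint_mat U)
      = (\<Sum>k\<in>UNIV. \<Sum>m\<in>UNIV. U $ k $ m * of_real (d m) * cnj (U $ k $ m))"
    by (simp add: trace_def matrix_matrix_mult_def[of "U ** diag_mat d"] udiag_entry adjoint_mat_def)
  also have "\<dots> = (\<Sum>m\<in>UNIV. of_real (d m) * (\<Sum>k\<in>UNIV. cnj (U $ k $ m) * U $ k $ m))"
    by (subst sum.swap) (simp add: sum_distrib_left mult.commute mult.left_commute)
  also have "\<dots> = (\<Sum>m\<in>UNIV. of_real (d m) * (adjoint_mat U ** U) $ m $ m)"
    by (simp add: matrix_matrix_mult_def adjoint_mat_def)
  also have "\<dots> = of_real (\<Sum>i\<in>UNIV. d i)"
    by (simp add: assms mat_def)
  finally show ?thesis .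
qed

lemma spec_some:
  assumes "hermitian_mat A"
  defines "p \<equiv> (SOME (U, ev). unitary_mat U \<and> A = U ** diag_mat ev ** adjoint_mat U)"
  shows "unitary_mat (fst p) \<and> A = fst p ** diag_mat (snd p) ** adjoint_mat (fst p)"
proof -
  from spectral[OF assms(1)] obtain U ev where
    "unitary_mat U \<and> A = U ** diag_mat ev ** adjoint_mat U" by blast
  then have "(\<lambda>(U, ev). unitary_mat U \<and> A = U ** diag_mat ev ** adjoint_mat U) (U, ev)" by simp
  then have "(\<lambda>(U, ev). unitary_mat U \<and> A = U ** diag_mat ev ** adjoint_mat U) p"
    unfolding p_def by (rule someI)
  then show ?thesis by (simp add: case_prod_beta)
qed

lemma vN_formula:
  assumes "hermitian_mat A"
  shows "\<exists>U ev. unitary_mat U \<and> A = U ** diag_mat ev ** adjoint_mat U \<and>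
           vN_S A = - (\<Sum>i\<in>UNIV. ev i * ln (ev i))"
proof -
  define p where "p = (SOME (U, ev). unitary_mat U \<and> A = U ** diag_mat ev ** adjoint_mat U)"
  have p: "unitary_mat (fst p) \<and> A = fst p ** diag_mat (snd p) ** adjoint_mat (fst p)"
    using spec_some[OF assms] unfolding p_def .
  have mf: "mat_fun f A = fst p ** diag_mat (f \<circ> snd p) ** adjoint_mat (fst p)" for f
    unfolding mat_fun_def p_def[symmetric] by (simp add: Let_def case_prod_beta)
  have "vN_S A = - (\<Sum>i\<in>UNIV. snd p i * ln (snd p i))"
    unfolding vN_S_def mf
    using p trace_udu[of "fst p" "(\<lambda>x. x * ln x) \<circ> snd p"] unfolding unitary_mat_def
    by simp
  then show ?thesis using p by blast
qed


lemma xlnx_pos_convex: "convex_on {0<..} (\<lambda>x::real. x * ln x)"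
proof (rule f''_ge0_imp_convex[where f' = "\<lambda>x. ln x + 1" and f'' = "\<lambda>x. 1 / x"])
  show "convex {0::real<..}" by simp
  fix x :: real assume x: "x \<in> {0<..}"
  then show "((\<lambda>x. x * ln x) has_real_derivative ln x + 1) (at x)"
    by (auto intro!: derivative_eq_intros)
  show "((\<lambda>x. ln x + 1) has_real_derivative 1 / x) (at x)"
    using x by (auto intro!: derivative_eq_intros)
  show "0 \<le> 1 / x" using x by simp
qed

lemma xlnx_scale: 
  fixes v y :: real
  assumes "0 \<le> v" "v \<le> 1" "0 \<le> y"
  shows "(v * y) * ln (v * y) \<le> v * (y * ln y)"
proof (cases "v = 0 \<or> y = 0")
  case True then show ?thesis by auto
next
  case False
  then have v: "v > 0" and y: "y > 0" using assms by auto
  have "ln (v * y) = ln v + ln y" using v y by (simp add: ln_mult)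
  moreover have "ln v \<le> 0" using v assms(2) by simp
  ultimately have "ln (v * y) \<le> ln y" by simp
  then have "(v * y) * ln (v * y) \<le> (v * y) * ln y"
    using v y by (intro mult_left_mono) auto
  then show ?thesis by (simp add: mult.assoc)
qed

lemma xlnx_convex: "convex_on {0..} (\<lambda>x::real. x * ln x)"
  unfolding convex_on_def
proof (intro conjI ballI allI impI)
  show "convex {0::real..}" by simp
  fix x y :: real and u v :: real
  assume x: "x \<in> {0..}" and y: "y \<in> {0..}" and u: "0 \<le> u" and v: "0 \<le> v" and uv: "u + v = 1"
  show "(u *\<^sub>R x + v *\<^sub>R y) * ln (u *\<^sub>R x + v *\<^sub>R y) \<le> u * (x * ln x) + v * (y * ln y)"
  proof (cases "x = 0")
    case True
    then show ?thesis using xlnx_scale[of v y] v uv u y by simp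
  next
    case x0: False
    show ?thesis
    proof (cases "y = 0")
      case True
      then show ?thesis using xlnx_scale[of u x] v uv u x by simp
    next
      case False
      then have "x \<in> {0<..}" "y \<in> {0<..}" using x0 x y by auto
      then show ?thesis using xlnx_pos_convex u v uv unfolding convex_on_def by blast
    qed
  qed
qed

definition colv :: "complex^'n^'n \<Rightarrow> 'n \<Rightarrow> complex^'n"
  where "colv U i = (\<chi> k. U $ k $ i)"

lemma adj_mv_cinner: "(adjoint_mat U *v x) $ i = cinner (colv U i) x"
  by (simp add: adjoint_mat_def matrix_vector_mult_def cinner_def colv_def)

lemma adjoint_col:
  assumes "adjoint_mat U ** U = mat 1"
  shows "(adjoint_mat U *v colv U i) $ k = (if k = i then 1 else 0)"
proof -
  have "(adjoint_mat U *v colv U i) $ k = (adjoint_mat U ** U) $ k $ i"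
    by (simp add: adjoint_mat_def matrix_vector_mult_def matrix_matrix_mult_def colv_def)
  then show ?thesis by (simp add: assms mat_def)
qed

lemma sum_if_sq: "(\<Sum>k\<in>UNIV. d k * (cmod (if k = i then (1::complex) else 0))^2) = d (i::'n::finite)"
proof -
  have "(\<Sum>k\<in>UNIV. d k * (cmod (if k = i then (1::complex) else 0))^2) = (\<Sum>k\<in>UNIV. if k = i then d k else 0)"
    by (rule sum.cong) auto
  then show ?thesis by simp
qed

lemma qf_col:
  assumes "unitary_mat U" "A = U ** diag_mat d ** adjoint_mat U"
  shows "qf A (colv U i) = d i"
  using qf_decomp[OF assms(2), of "colv U i"] adjoint_col[of U i] assms(1)
  unfolding unitary_mat_def by (simp add: sum_if_sq)

lemma norm_col:
  assumes "unitary_mat U"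
  shows "(norm (colv U i))^2 = 1"
proof -
  have "(norm (colv U i))^2 = (\<Sum>k\<in>UNIV. 1 * (cmod ((adjoint_mat U *v colv U i)$k))^2)"
    using parseval[of U "colv U i"] assms unfolding unitary_mat_def by simp
  also have "\<dots> = 1" using adjoint_col[of U i] assms unfolding unitary_mat_def
    by (simp only: sum_if_sq)
  finally show ?thesis .
qed

lemma psd_iff: "psd_mat A \<longleftrightarrow> hermitian_mat A \<and> (\<forall>x. 0 \<le> qf A x)"
  by (simp add: psd_mat_def qf_def cinner_def)

lemma psd_eig_nonneg:
  assumes "psd_mat A" "unitary_mat U" "A = U ** diag_mat d ** adjoint_mat U"
  shows "d i \<ge> 0"
proof -
  have "0 \<le> qf A (colv U i)" using assms(1) psd_iff by blast
  then show ?thesis using qf_col[OF assms(2,3), of i] by simp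
qed

lemma diag_bound:
  assumes psd: "psd_mat A" and U: "unitary_mat U" and A: "A = U ** diag_mat d ** adjoint_mat U"
    and V: "unitary_mat V"
  shows "(\<Sum>j\<in>UNIV. qf A (colv V j) * ln (qf A (colv V j))) \<le> (\<Sum>i\<in>UNIV. d i * ln (d i))"
proof -
  define M where "M i j = (cmod ((adjoint_mat U *v colv V j)$i))^2" for i j
  have dnn: "d i \<ge> 0" for i by (rule psd_eig_nonneg[OF psd U A])
  have qfM: "qf A (colv V j) = (\<Sum>i\<in>UNIV. M i j * d i)" for j
    using qf_decomp[OF A] by (simp add: M_def mult.commute)
  have Mnn: "M i j \<ge> 0" for i j by (simp add: M_def)
  have Mcol: "(\<Sum>i\<in>UNIV. M i j) = 1" for j
    using parseval[of U "colv V j"] U norm_col[OF V, of j] unfolding unitary_mat_def M_def by simp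
  have Mrow: "(\<Sum>j\<in>UNIV. M i j) = 1" for i
  proof -
    have "M i j = (cmod ((adjoint_mat V *v colv U i)$j))^2" for j
    proof -
      have "cmod (cinner (colv U i) (colv V j)) = cmod (cinner (colv V j) (colv U i))"
        by (metis cinner_cnj complex_mod_cnj)
      then show ?thesis by (simp add: M_def adj_mv_cinner)
    qed
    then have "(\<Sum>j\<in>UNIV. M i j) = (\<Sum>j\<in>UNIV. (cmod ((adjoint_mat V *v colv U i)$j))^2)" by simp
    also have "\<dots> = (norm (colv U i))^2" using parseval[of V "colv U i"] V
      unfolding unitary_mat_def by simp
    also have "\<dots> = 1" by (rule norm_col[OF U])
    finally show ?thesis .
  qed
  have jensen: "qf A (colv V j) * ln (qf A (colv V j)) \<le> (\<Sum>i\<in>UNIV. M i j * (d i * ln (d i)))" for j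
  proof -
    have "(\<lambda>x. x * ln x) (\<Sum>i\<in>UNIV. M i j *\<^sub>R d i) \<le> (\<Sum>i\<in>UNIV. M i j * (\<lambda>x. x * ln x) (d i))"
      by (rule convex_on_sum[OF finite_class.finite_UNIV UNIV_not_empty xlnx_convex Mcol]) (auto simp: Mnn dnn)
    then show ?thesis by (simp add: qfM)
  qed
  have "(\<Sum>j\<in>UNIV. qf A (colv V j) * ln (qf A (colv V j)))
        \<le> (\<Sum>j\<in>UNIV. \<Sum>i\<in>UNIV. M i j * (d i * ln (d i)))"
    by (rule sum_mono) (rule jensen)
  also have "\<dots> = (\<Sum>i\<in>UNIV. (\<Sum>j\<in>UNIV. M i j) * (d i * ln (d i)))"
    by (subst sum.swap) (simp add: sum_distrib_right)
  also have "\<dots> = (\<Sum>i\<in>UNIV. d i * ln (d i))" by (simp add: Mrow)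
  finally show ?thesis .
qed


lemma mat_scaleR_nth: "(r *\<^sub>R (M::complex^'n^'m))$i$j = of_real r * M$i$j"
  unfolding vector_scaleR_component by (rule scaleR_conv_of_real)

lemma mv_scaleR_mat: "(r *\<^sub>R (M::complex^'n^'m)) *v x = r *\<^sub>R (M *v x)"
  unfolding vec_eq_iff
  by (simp add: matrix_vector_mult_def mat_scaleR_nth vec_scaleR_nth sum_distrib_left mult.assoc
      del: vector_scaleR_component)

lemma qf_lin: "qf (u *\<^sub>R A + v *\<^sub>R B) x = u * qf A x + v * qf B x"
  by (simp add: qf_def matrix_vector_mult_add_rdistrib mv_scaleR_mat cinner_add_right cinner_scaleR_right)

lemma adjoint_lin: "adjoint_mat (u *\<^sub>R A + v *\<^sub>R B) = u *\<^sub>R adjoint_mat A + v *\<^sub>R adjoint_mat B"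
  by (simp add: vec_eq_iff adjoint_mat_def mat_scaleR_nth del: vector_scaleR_component)

lemma trace_lin: "trace (u *\<^sub>R A + v *\<^sub>R (B::complex^'n^'n)) = of_real u * trace A + of_real v * trace B"
  by (simp add: trace_def mat_scaleR_nth sum.distrib sum_distrib_left del: vector_scaleR_component)

lemma density_iff: "\<rho> \<in> density_mats \<longleftrightarrow> hermitian_mat \<rho> \<and> (\<forall>x. 0 \<le> qf \<rho> x) \<and> trace \<rho> = 1"
  by (simp add: density_mats_def psd_iff)

lemma convex_density: "convex (density_mats :: (complex^'n^'n) set)"
  unfolding convex_def
proof (intro ballI allI impI)
  fix x y :: "complex^'n^'n" and u v :: real
  assume x: "x \<in> density_mats" and y: "y \<in> density_mats" and u: "0 \<le> u" and v: "0 \<le> v"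
    and uv: "u + v = 1"
  have h: "hermitian_mat (u *\<^sub>R x + v *\<^sub>R y)"
    using x y unfolding density_iff hermitian_mat_def by (simp add: adjoint_lin)
  have p: "0 \<le> qf (u *\<^sub>R x + v *\<^sub>R y) z" for z
    using x y u v unfolding density_iff by (simp add: qf_lin)
  have t: "trace (u *\<^sub>R x + v *\<^sub>R y) = 1"
    using x y uv unfolding density_iff trace_lin
    by (metis mult.right_neutral of_real_1 of_real_add)
  show "u *\<^sub>R x + v *\<^sub>R y \<in> density_mats" using h p t by (simp add: density_iff)
qed

lemma vN_concave: "convex_on density_mats (\<lambda>\<rho>::complex^'n^'n. - vN_S \<rho>)"
  unfolding convex_on_def
proof (intro conjI ballI allI impI)
  show "convex (density_mats :: (complex^'n^'n) set)" by (rule convex_density)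
  fix \<sigma> \<tau> :: "complex^'n^'n" and u v :: real
  assume s: "\<sigma> \<in> density_mats" and t: "\<tau> \<in> density_mats" and u: "0 \<le> u" and v: "0 \<le> v"
    and uv: "u + v = 1"
  define \<rho> where "\<rho> = u *\<^sub>R \<sigma> + v *\<^sub>R \<tau>"
  have r: "\<rho> \<in> density_mats" unfolding \<rho>_def
    using convex_density s t u v uv unfolding convex_def by blast
  obtain V \<mu> where V: "unitary_mat V" "\<rho> = V ** diag_mat \<mu> ** adjoint_mat V"
      "vN_S \<rho> = - (\<Sum>i\<in>UNIV. \<mu> i * ln (\<mu> i))"
    using vN_formula r density_iff by blast
  obtain U \<alpha> where U: "unitary_mat U" "\<sigma> = U ** diag_mat \<alpha> ** adjoint_mat U"
      "vN_S \<sigma> = - (\<Sum>i\<in>UNIV. \<alpha> i * ln (\<alpha> i))"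
    using vN_formula s density_iff by blast
  obtain W \<beta> where W: "unitary_mat W" "\<tau> = W ** diag_mat \<beta> ** adjoint_mat W"
      "vN_S \<tau> = - (\<Sum>i\<in>UNIV. \<beta> i * ln (\<beta> i))"
    using vN_formula t density_iff by blast
  have spsd: "psd_mat \<sigma>" and tpsd: "psd_mat \<tau>" using s t by (auto simp: density_mats_def)
  have mu: "\<mu> j = u * qf \<sigma> (colv V j) + v * qf \<tau> (colv V j)" for j
    using qf_col[OF V(1,2), of j] by (simp add: \<rho>_def qf_lin)
  have qs: "0 \<le> qf \<sigma> x" and qt: "0 \<le> qf \<tau> x" for x
    using s t by (auto simp: density_iff)
  have step: "\<mu> j * ln (\<mu> j) \<le> u * (qf \<sigma> (colv V j) * ln (qf \<sigma> (colv V j)))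
                 + v * (qf \<tau> (colv V j) * ln (qf \<tau> (colv V j)))" for j
    using xlnx_convex qs[of "colv V j"] qt[of "colv V j"] u v uv unfolding convex_on_def mu
    by simp
  have "(\<Sum>j\<in>UNIV. \<mu> j * ln (\<mu> j)) \<le>
      (\<Sum>j\<in>UNIV. u * (qf \<sigma> (colv V j) * ln (qf \<sigma> (colv V j)))
                 + v * (qf \<tau> (colv V j) * ln (qf \<tau> (colv V j))))"
    by (rule sum_mono) (rule step)
  also have "\<dots> = u * (\<Sum>j\<in>UNIV. qf \<sigma> (colv V j) * ln (qf \<sigma> (colv V j)))
                 + v * (\<Sum>j\<in>UNIV. qf \<tau> (colv V j) * ln (qf \<tau> (colv V j)))"
    by (simp add: sum.distrib sum_distrib_left)
  also have "\<dots> \<le> u * (\<Sum>i\<in>UNIV. \<alpha> i * ln (\<alpha> i)) + v * (\<Sum>i\<in>UNIV. \<beta> i * ln (\<beta> i))"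
    using diag_bound[OF spsd U(1,2) V(1)] diag_bound[OF tpsd W(1,2) V(1)] u v
    by (intro add_mono mult_left_mono) auto
  finally have "(\<Sum>j\<in>UNIV. \<mu> j * ln (\<mu> j)) \<le>
      u * (\<Sum>i\<in>UNIV. \<alpha> i * ln (\<alpha> i)) + v * (\<Sum>i\<in>UNIV. \<beta> i * ln (\<beta> i))" .
  then show "- vN_S (u *\<^sub>R \<sigma> + v *\<^sub>R \<tau>) \<le> u * - vN_S \<sigma> + v * - vN_S \<tau>"
    using V(3) U(3) W(3) unfolding \<rho>_def by simp
qed


lemma sum_prod_UNIV: "(\<Sum>p\<in>(UNIV::('b::finite \<times> 'r::finite) set). h p) = (\<Sum>b\<in>UNIV. \<Sum>r\<in>UNIV. h (b, r))"
  by (simp add: sum.cartesian_product)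

definition lift :: "complex^'b \<Rightarrow> 'r \<Rightarrow> complex^('b::finite \<times> 'r::finite)"
  where "lift x r = (\<chi> p. if snd p = r then x $ fst p else 0)"

lemma sum_lift_right: "(\<Sum>q\<in>UNIV. g q * (lift x r)$q) = (\<Sum>b\<in>UNIV. g (b, r) * x$b)"
proof -
  have "(\<Sum>q\<in>UNIV. g q * (lift x r)$q) = (\<Sum>b\<in>UNIV. \<Sum>r'\<in>UNIV. g (b, r') * (lift x r)$(b, r'))"
    by (rule sum_prod_UNIV)
  also have "\<dots> = (\<Sum>b\<in>UNIV. \<Sum>r'\<in>UNIV. if r' = r then g (b, r) * x$b else 0)"
    by (intro sum.cong refl) (simp add: lift_def)
  also have "\<dots> = (\<Sum>b\<in>UNIV. g (b, r) * x$b)" by simp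
  finally show ?thesis .
qed

lemma sum_lift_left: "(\<Sum>q\<in>UNIV. cnj ((lift x r)$q) * g q) = (\<Sum>b\<in>UNIV. cnj (x$b) * g (b, r))"
proof -
  have "(\<Sum>q\<in>UNIV. cnj ((lift x r)$q) * g q) = (\<Sum>b\<in>UNIV. \<Sum>r'\<in>UNIV. cnj ((lift x r)$(b, r')) * g (b, r'))"
    by (rule sum_prod_UNIV)
  also have "\<dots> = (\<Sum>b\<in>UNIV. \<Sum>r'\<in>UNIV. if r' = r then cnj (x$b) * g (b, r) else 0)"
    by (intro sum.cong refl) (simp add: lift_def)
  also have "\<dots> = (\<Sum>b\<in>UNIV. cnj (x$b) * g (b, r))" by simp
  finally show ?thesis .
qed

lemma cinner_lift:
  "cinner (lift x r) (\<rho> *v lift x r) = (\<Sum>b1\<in>UNIV. cnj (x$b1) * (\<Sum>b2\<in>UNIV. \<rho>$(b1,r)$(b2,r) * x$b2))"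
proof -
  have "cinner (lift x r) (\<rho> *v lift x r) = (\<Sum>p\<in>UNIV. cnj ((lift x r)$p) * (\<Sum>q\<in>UNIV. \<rho>$p$q * (lift x r)$q))"
    by (simp add: cinner_def matrix_vector_mult_def)
  also have "\<dots> = (\<Sum>p\<in>UNIV. cnj ((lift x r)$p) * (\<Sum>b2\<in>UNIV. \<rho>$p$(b2,r) * x$b2))"
    by (simp only: sum_lift_right)
  also have "\<dots> = (\<Sum>b1\<in>UNIV. cnj (x$b1) * (\<Sum>b2\<in>UNIV. \<rho>$(b1,r)$(b2,r) * x$b2))"
    by (rule sum_lift_left)
  finally show ?thesis .
qed

lemma cinner_ptrace:
  "cinner x (ptrace_R \<rho> *v x) = (\<Sum>r\<in>UNIV. cinner (lift x r) (\<rho> *v lift x r))"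
proof -
  have "cinner x (ptrace_R \<rho> *v x) = (\<Sum>b1\<in>UNIV. \<Sum>b2\<in>UNIV. \<Sum>r\<in>UNIV. cnj (x$b1) * (\<rho>$(b1,r)$(b2,r) * x$b2))"
    by (simp add: cinner_def matrix_vector_mult_def ptrace_R_def sum_distrib_left sum_distrib_right)
  also have "\<dots> = (\<Sum>b1\<in>UNIV. \<Sum>r\<in>UNIV. \<Sum>b2\<in>UNIV. cnj (x$b1) * (\<rho>$(b1,r)$(b2,r) * x$b2))"
    by (intro sum.cong refl) (rule sum.swap)
  also have "\<dots> = (\<Sum>r\<in>UNIV. \<Sum>b1\<in>UNIV. \<Sum>b2\<in>UNIV. cnj (x$b1) * (\<rho>$(b1,r)$(b2,r) * x$b2))"
    by (rule sum.swap)
  also have "\<dots> = (\<Sum>r\<in>UNIV. cinner (lift x r) (\<rho> *v lift x r))"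
    by (simp add: cinner_lift sum_distrib_left)
  finally show ?thesis .
qed

lemma ptrace_density:
  assumes "\<rho> \<in> density_mats"
  shows "ptrace_R \<rho> \<in> density_mats"
proof -
  have herm: "hermitian_mat \<rho>" and psd: "\<And>y. 0 \<le> qf \<rho> y" and tr: "trace \<rho> = 1"
    using assms by (auto simp: density_iff)
  have h: "cnj (\<rho>$j$i) = \<rho>$i$j" for i j using herm_entry[OF herm, of i j] by simp
  have H: "hermitian_mat (ptrace_R \<rho>)"
    unfolding hermitian_mat_def adjoint_mat_def ptrace_R_def
    by (simp add: vec_eq_iff h)
  have P: "0 \<le> qf (ptrace_R \<rho>) x" for x
  proof -
    have "qf (ptrace_R \<rho>) x = (\<Sum>r\<in>UNIV. qf \<rho> (lift x r))"
      by (simp add: qf_def cinner_ptrace)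
    also have "\<dots> \<ge> 0" by (intro sum_nonneg psd)
    finally show ?thesis .
  qed
  have "trace (ptrace_R \<rho>) = (\<Sum>b\<in>UNIV. \<Sum>r\<in>UNIV. \<rho>$(b,r)$(b,r))"
    by (simp add: trace_def ptrace_R_def)
  also have "\<dots> = trace \<rho>" by (simp add: trace_def sum_prod_UNIV)
  finally have T: "trace (ptrace_R \<rho>) = 1" using tr by simp
  show ?thesis using H P T by (simp add: density_iff)
qed

lemma ptrace_lin: "ptrace_R (u *\<^sub>R A + v *\<^sub>R B) = u *\<^sub>R ptrace_R A + v *\<^sub>R ptrace_R B"
  by (simp add: vec_eq_iff ptrace_R_def mat_scaleR_nth sum.distrib sum_distrib_left
      del: vector_scaleR_component)

lemma part_b:
  fixes \<rho>A :: "complex^'a^'a"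
  shows "rel_smooth 1 (I_q \<rho>A) (\<lambda>\<rho>::complex^('b::finite \<times> 'r::finite)^('b \<times> 'r). - vN_S \<rho>) density_mats"
proof -
  have c: "convex_on density_mats (\<lambda>\<rho>::complex^('b \<times> 'r)^('b \<times> 'r). - vN_S (ptrace_R \<rho>))"
    unfolding convex_on_def
  proof (intro conjI ballI allI impI)
    show "convex (density_mats :: (complex^('b \<times> 'r)^('b \<times> 'r)) set)" by (rule convex_density)
    fix x y :: "complex^('b \<times> 'r)^('b \<times> 'r)" and u v :: real
    assume "x \<in> density_mats" "y \<in> density_mats" "0 \<le> u" "0 \<le> v" "u + v = 1"
    then show "- vN_S (ptrace_R (u *\<^sub>R x + v *\<^sub>R y)) \<le> u * - vN_S (ptrace_R x) + v * - vN_S (ptrace_R y)"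
      using vN_concave ptrace_density unfolding convex_on_def ptrace_lin by blast
  qed
  have c2: "convex_on density_mats (\<lambda>\<rho>::complex^('b \<times> 'r)^('b \<times> 'r). 1 * - vN_S \<rho> - I_q \<rho>A \<rho>)"
  proof -
    have "convex_on density_mats (\<lambda>\<rho>::complex^('b \<times> 'r)^('b \<times> 'r). (- vN_S \<rho>A) + - vN_S (ptrace_R \<rho>))"
      by (intro convex_on_add c) (simp add: convex_on_const convex_density)
    then show ?thesis by (simp add: I_q_def)
  qed
  show ?thesis unfolding rel_smooth_def
    by (rule convex_on_subset[OF c2 rel_interior_subset convex_rel_interior[OF convex_density]])
qed


lemma logsum2:
  fixes A1 A2 B1 B2 :: real
  assumes "0 \<le> A1" "0 \<le> A2" "A1 \<le> B1" "A2 \<le> B2"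
  shows "(A1 + A2) * ln ((A1 + A2) / (B1 + B2)) \<le> A1 * ln (A1 / B1) + A2 * ln (A2 / B2)"
proof (cases "A1 = 0")
  case True
  show ?thesis
  proof (cases "A2 = 0")
    case True with \<open>A1 = 0\<close> show ?thesis by simp
  next
    case False
    then have A2: "A2 > 0" using assms by simp
    have "A2 / (B1 + B2) \<le> A2 / B2"
      using A2 assms True by (intro divide_left_mono) auto
    then have "ln (A2 / (B1 + B2)) \<le> ln (A2 / B2)"
      using A2 assms True by (subst ln_le_cancel_iff) auto
    then show ?thesis using True A2 by simp
  qed
next
  case A1ne: False
  then have A1: "A1 > 0" using assms by simp
  show ?thesis
  proof (cases "A2 = 0")
    case True
    have "A1 / (B1 + B2) \<le> A1 / B1"
      using A1 assms True by (intro divide_left_mono) auto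
    then have "ln (A1 / (B1 + B2)) \<le> ln (A1 / B1)"
      using A1 assms True by (subst ln_le_cancel_iff) auto
    then show ?thesis using True A1 by simp
  next
    case False
    then have A2: "A2 > 0" using assms by simp
    have B1: "B1 > 0" and B2: "B2 > 0" using A1 A2 assms by auto
    define B where "B = B1 + B2"
    have B: "B > 0" using B1 B2 by (simp add: B_def)
    have w: "B1 / B + B2 / B = 1" using B by (simp add: B_def add_divide_distrib[symmetric])
    have conv: "(u * x + v * y) * ln (u * x + v * y) \<le> u * (x * ln x) + v * (y * ln y)"
      if "0 \<le> x" "0 \<le> y" "0 \<le> u" "0 \<le> v" "u + v = 1" for x y u v :: real
    proof -
      have "x \<in> {0..}" "y \<in> {0..}" using that by auto
      then have "(\<lambda>x. x * ln x) (u *\<^sub>R x + v *\<^sub>R y) \<le> u * (\<lambda>x. x * ln x) x + v * (\<lambda>x. x * ln x) y"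
        using xlnx_convex that unfolding convex_on_def by blast
      then show ?thesis by simp
    qed
    have e1: "B1 / B * (A1 / B1) + B2 / B * (A2 / B2) = (A1 + A2) / B"
      using B1 B2 B by (simp add: field_simps)
    have e2: "B1 / B * (A1 / B1 * ln (A1 / B1)) = A1 / B * ln (A1 / B1)"
      using B1 by simp
    have e3: "B2 / B * (A2 / B2 * ln (A2 / B2)) = A2 / B * ln (A2 / B2)"
      using B2 by simp
    have "(A1 + A2) / B * ln ((A1 + A2) / B) \<le> A1 / B * ln (A1 / B1) + A2 / B * ln (A2 / B2)"
      using conv[of "A1 / B1" "A2 / B2" "B1 / B" "B2 / B"] A1 A2 B1 B2 B w
      unfolding e1 e2 e3 by simp
    then have "B * ((A1 + A2) / B * ln ((A1 + A2) / B)) \<le> B * (A1 / B * ln (A1 / B1) + A2 / B * ln (A2 / B2))"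
      using B by (intro mult_left_mono) auto
    moreover have "B * ((A1 + A2) / B * ln ((A1 + A2) / B)) = (A1 + A2) * ln ((A1 + A2) / B)"
      using B by simp
    moreover have "B * (A1 / B * ln (A1 / B1) + A2 / B * ln (A2 / B2)) = A1 * ln (A1 / B1) + A2 * ln (A2 / B2)"
      using B by (simp add: distrib_left)
    ultimately have "(A1 + A2) * ln ((A1 + A2) / B) \<le> A1 * ln (A1 / B1) + A2 * ln (A2 / B2)"
      by simp
    then show ?thesis by (simp add: B_def)
  qed
qed

lemma h_joint:
  fixes a1 a2 b1 b2 u v :: real
  assumes "0 \<le> a1" "a1 \<le> b1" "0 \<le> a2" "a2 \<le> b2" "0 \<le> u" "0 \<le> v"
  shows "(u * a1 + v * a2) * ln ((u * a1 + v * a2) / (u * b1 + v * b2))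
          \<le> u * (a1 * ln (a1 / b1)) + v * (a2 * ln (a2 / b2))"
proof -
  have sc: "(w * a) * ln ((w * a) / (w * b)) = w * (a * ln (a / b))" if "0 \<le> w" for w a b :: real
  proof (cases "w = 0")
    case True then show ?thesis by simp
  next
    case False then show ?thesis by simp
  qed
  have "(u * a1 + v * a2) * ln ((u * a1 + v * a2) / (u * b1 + v * b2))
      \<le> (u * a1) * ln ((u * a1) / (u * b1)) + (v * a2) * ln ((v * a2) / (v * b2))"
    using assms by (intro logsum2 mult_left_mono mult_nonneg_nonneg) auto
  also have "\<dots> = u * (a1 * ln (a1 / b1)) + v * (a2 * ln (a2 / b2))"
    using assms by (simp add: sc)
  finally show ?thesis .
qed

lemma termwise:
  fixes a R pj :: real
  assumes "0 \<le> a" "a \<le> R" "0 \<le> pj"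
  shows "a * ln a - a * ln (a / (pj * R)) = (if pj = 0 then a * ln (a / R) else a * ln pj) + a * ln R"
proof (cases "a = 0")
  case True then show ?thesis by simp
next
  case False
  then have a: "a > 0" and R: "R > 0" using assms by auto
  show ?thesis
  proof (cases "pj = 0")
    case True then show ?thesis using a R by (simp add: ln_div algebra_simps)
  next
    case False
    then have "pj > 0" using assms by simp
    then show ?thesis using a R False by (simp add: ln_div ln_mult algebra_simps)
  qed
qed

lemma convex_on_sum_fun:
  assumes "finite I" "convex S" "\<And>i. i \<in> I \<Longrightarrow> convex_on S (f i)"
  shows "convex_on S (\<lambda>x. \<Sum>i\<in>I. f i x)"
  using assms
proof (induction I rule: finite_induct)
  case empty then show ?case by (simp add: convex_on_const)
next
  case (insert i I)
  then show ?case by (simp add: convex_on_add)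
qed

lemma convex_on_eq:
  assumes "convex_on S f" "\<And>x. x \<in> S \<Longrightarrow> f x = g x"
  shows "convex_on S g"
  using assms unfolding convex_on_def convex_def by auto

definition rs :: "real^'m^'n \<Rightarrow> 'n \<Rightarrow> real"
  where "rs P i = (\<Sum>k\<in>UNIV. P$i$k)"

definition cterm :: "real^'m \<Rightarrow> 'm \<Rightarrow> real \<Rightarrow> real \<Rightarrow> real"
  where "cterm p j a b = (if p$j = 0 then a * ln (a / b) else a * ln (p$j))"

lemma rs_lin: "rs (u *\<^sub>R P + v *\<^sub>R Q) i = u * rs P i + v * rs Q i"
  by (simp add: rs_def sum.distrib sum_distrib_left)

lemma entry_le_rs: "(\<forall>i j. 0 \<le> P$i$j) \<Longrightarrow> P$i$j \<le> rs P i"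
  unfolding rs_def by (rule member_le_sum) auto

lemma convex_mat_simplex: "convex (mat_simplex :: (real^'m^'n) set)"
  unfolding convex_def mat_simplex_def
  by (auto simp: sum.distrib sum_distrib_left[symmetric])

lemma Ic_rewrite:
  fixes P :: "real^'m^'n"
  assumes p: "p \<in> prob_simplex" and P: "\<forall>i j. 0 \<le> P$i$j"
  shows "1 * - shannon_H P - I_c p P
     = (\<Sum>i\<in>UNIV. rs P i * ln (rs P i) + (\<Sum>j\<in>UNIV. cterm p j (P$i$j) (rs P i)))"
proof -
  have pnn: "0 \<le> p$j" for j using p by (simp add: prob_simplex_def)
  have I: "I_c p P = (\<Sum>i\<in>UNIV. \<Sum>j\<in>UNIV. P$i$j * ln (P$i$j / (p$j * rs P i)))"
    unfolding I_c_def rs_def by (subst sum.swap) (simp add: sum_distrib_left)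
  have "1 * - shannon_H P - I_c p P
      = (\<Sum>i\<in>UNIV. \<Sum>j\<in>UNIV. P$i$j * ln (P$i$j) - P$i$j * ln (P$i$j / (p$j * rs P i)))"
    unfolding I shannon_H_def by (simp add: sum_subtractf)
  also have "\<dots> = (\<Sum>i\<in>UNIV. \<Sum>j\<in>UNIV. cterm p j (P$i$j) (rs P i) + P$i$j * ln (rs P i))"
    using termwise P entry_le_rs[OF P] pnn unfolding cterm_def by (intro sum.cong refl) auto
  also have "\<dots> = (\<Sum>i\<in>UNIV. rs P i * ln (rs P i) + (\<Sum>j\<in>UNIV. cterm p j (P$i$j) (rs P i)))"
    by (simp add: sum.distrib rs_def sum_distrib_right)
  finally show ?thesis .
qed

lemma part_a:
  fixes p :: "real^'m"
  assumes p: "p \<in> prob_simplex"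
  shows "rel_smooth 1 (I_c p) (\<lambda>P::real^'m^'n. - shannon_H P) mat_simplex"
proof -
  have pnn: "0 \<le> p$j" for j using p by (simp add: prob_simplex_def)
  have nn: "\<forall>i j. 0 \<le> P$i$j" if "P \<in> mat_simplex" for P :: "real^'m^'n"
    using that by (simp add: mat_simplex_def)
  have c1: "convex_on mat_simplex (\<lambda>P::real^'m^'n. rs P i * ln (rs P i))" for i
    unfolding convex_on_def
  proof (intro conjI ballI allI impI)
    show "convex (mat_simplex :: (real^'m^'n) set)" by (rule convex_mat_simplex)
    fix P Q :: "real^'m^'n" and u v :: real
    assume "P \<in> mat_simplex" "Q \<in> mat_simplex" "0 \<le> u" "0 \<le> v" "u + v = 1"
    moreover have "0 \<le> rs P i" "0 \<le> rs Q i"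
      using nn[OF \<open>P \<in> mat_simplex\<close>] nn[OF \<open>Q \<in> mat_simplex\<close>] by (auto simp: rs_def intro: sum_nonneg)
    ultimately show "rs (u *\<^sub>R P + v *\<^sub>R Q) i * ln (rs (u *\<^sub>R P + v *\<^sub>R Q) i)
        \<le> u * (rs P i * ln (rs P i)) + v * (rs Q i * ln (rs Q i))"
      using xlnx_convex unfolding convex_on_def rs_lin by simp
  qed
  have c2: "convex_on mat_simplex (\<lambda>P::real^'m^'n. cterm p j (P$i$j) (rs P i))" for i j
    unfolding convex_on_def
  proof (intro conjI ballI allI impI)
    show "convex (mat_simplex :: (real^'m^'n) set)" by (rule convex_mat_simplex)
    fix P Q :: "real^'m^'n" and u v :: real
    assume PQ: "P \<in> mat_simplex" "Q \<in> mat_simplex" and uv: "0 \<le> u" "0 \<le> v" "u + v = 1"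
    have e: "(u *\<^sub>R P + v *\<^sub>R Q)$i$j = u * P$i$j + v * Q$i$j" by simp
    show "cterm p j ((u *\<^sub>R P + v *\<^sub>R Q)$i$j) (rs (u *\<^sub>R P + v *\<^sub>R Q) i)
        \<le> u * cterm p j (P$i$j) (rs P i) + v * cterm p j (Q$i$j) (rs Q i)"
    proof (cases "p$j = 0")
      case True
      then show ?thesis unfolding cterm_def e rs_lin
        using h_joint[of "P$i$j" "rs P i" "Q$i$j" "rs Q i" u v] uv
          nn[OF PQ(1)] nn[OF PQ(2)] entry_le_rs[OF nn[OF PQ(1)]] entry_le_rs[OF nn[OF PQ(2)]]
        by simp
    next
      case False
      then show ?thesis unfolding cterm_def e by (simp add: algebra_simps)
    qed
  qed
  have c: "convex_on mat_simplex (\<lambda>P::real^'m^'n.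
      \<Sum>i\<in>UNIV. rs P i * ln (rs P i) + (\<Sum>j\<in>UNIV. cterm p j (P$i$j) (rs P i)))"
    by (intro convex_on_sum_fun convex_on_add c1 c2 convex_mat_simplex finite_class.finite_UNIV)
  have c': "convex_on mat_simplex (\<lambda>P::real^'m^'n. 1 * - shannon_H P - I_c p P)"
    by (rule convex_on_eq[OF c], rule sym, rule Ic_rewrite[OF p], erule nn)
  show ?thesis unfolding rel_smooth_def
    by (rule convex_on_subset[OF c' rel_interior_subset convex_rel_interior[OF convex_mat_simplex]])
qed

theorem mainTheorem8:
  shows "(\<forall>p::real^'m. p \<in> prob_simplex \<longrightarrow>
            rel_smooth 1 (I_c p) (\<lambda>P::real^'m^'n. - shannon_H P) mat_simplex)
       \<and> (\<forall>\<rho>A::complex^'a^'a. \<rho>A \<in> density_mats \<longrightarrow>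
            rel_smooth 1 (I_q \<rho>A) (\<lambda>\<rho>::complex^('b::finite \<times> 'r::finite)^('b \<times> 'r). - vN_S \<rho>)
              density_mats)"
  using part_a part_b by blast

end
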